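(* Every $E$-sequence is isomorphic to the evolutionary sequence of some phylogenetic quiver.
   Context: A quiver consists of a class of vertices and, for each ordered pair of vertices $(A,B)$, a set of edges $A\to B$ (loops and multiple edges allowed). An evolution of length $m\ge 0$ is a sequence $A_0\leftarrow A_1\leftarrow\cdots\leftarrow A_m$ of vertices together with edges $A_k\to A_{k-1}$ ($1\le k\le m$); $A_0$ is its initial and $A_m$ its terminal vertex. Write $A\le B$ ($A$ is an ancestor of $B$) if there is an evolution with initial vertex $A$ and terminal vertex $B$; $A,B$ are isotypic ($A\sim B$) if $A\le B$ and $B\le A$. A vertex $A$ is primitive if every ancestor of $A$ is isotypic to $A$. A full evolution for $X$ is an evolution with primitive initial vertex and terminal vertex $X$. The height $h(X)$ is the smallest length of a full evolution for $X$ ($\infty$ if none). An evolution $\alpha=(A_0\leftarrow\cdots\leftarrow A_m)$ embeds in $\beta=(B_0\leftarrow\cdots\leftarrow B_n)$ if $m\le n$ and there are $0\le r_0<\cdots<r_m\le n$ with $A_k\sim B_{r_k}$. A universal evolution for $X$ is a full evolution for $X$ embedding in every full evolution for $X$; $X$ is phylogenetic if one exists. A quiver is monotonous if $h(A)\ge h(B)$ for every edge $A\to B$; small if its isotypy classes form a set; phylogenetic if small, monotonous, and all vertices phylogenetic. Evolutionary sequence of a phylogenetic quiver $\mathcal O$: let $\mathcal O_m$ be the set of isotypy classes $[A]$ of vertices of height $m$, partially ordered by $[A]\le[B]$ iff $A\le B$; for $m\ge1$ the parental map $p:\mathcal O_m\to\mathcal O_{m-1}$ is $p([A])=[A_{m-1}]$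 where $A_0\leftarrow\cdots\leftarrow A_{m-1}\leftarrow A_m=A$ is any universal evolution for $A$ (this is well defined). The evolutionary sequence is the family of posets $(\mathcal O_m,\le)_{m\ge0}$ with the maps $p$. An $E$-sequence consists of partially ordered sets $(P_m,\le)_{m\ge0}$ and maps $p=p_m:P_m\to P_{m-1}$ ($m\ge1$) such that the partial order on $P_0$ is trivial (equality) and for all $m\ge1$ and $a,b\in P_m$, $a\le b$ implies $p(a)=p(b)$. Two $E$-sequences $P,P'$ are isomorphic if there are bijections $f_m:P_m\to P'_m$ ($m\ge0$) with $p'f_m=f_{m-1}p$ for $m\ge1$ and $a\le b\iff f_m(a)\le f_m(b)$ for all $a,b\in P_m$. *)

theory Defs
  imports Main "HOL-Library.Extended_Nat"
begin

record ('v, 'e) quiver =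
  verts :: "'v set"
  edges :: "'v \<Rightarrow> 'v \<Rightarrow> 'e set"

definition wf_quiver :: "('v, 'e) quiver \<Rightarrow> bool" where
  "wf_quiver Q \<longleftrightarrow> (\<forall>A B. edges Q A B \<noteq> {} \<longrightarrow> A \<in> verts Q \<and> B \<in> verts Q)"

text \<open>An evolution A_0 <- A_1 <- ... <- A_m is a pair (As, es) with As = [A_0,...,A_m]
  and es = [e_1,...,e_m], e_k an edge A_k -> A_(k-1) (stored at index k-1).\<close>
type_synonym ('v, 'e) evolution = "'v list \<times> 'e list"

definition evolution :: "('v, 'e) quiver \<Rightarrow> ('v, 'e) evolution \<Rightarrow> bool" where
  "evolution Q ev \<longleftrightarrow>
     fst ev \<noteq> [] \<and> length (snd ev) = length (fst ev) - 1 \<and>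
     set (fst ev) \<subseteq> verts Q \<and>
     (\<forall>k. 1 \<le> k \<and> k < length (fst ev) \<longrightarrow>
          snd ev ! (k - 1) \<in> edges Q (fst ev ! k) (fst ev ! (k - 1)))"

definition evo_length :: "('v, 'e) evolution \<Rightarrow> nat" where
  "evo_length ev = length (fst ev) - 1"

definition initial :: "('v, 'e) evolution \<Rightarrow> 'v" where
  "initial ev = hd (fst ev)"

definition terminal :: "('v, 'e) evolution \<Rightarrow> 'v" where
  "terminal ev = last (fst ev)"

definition ancestor :: "('v, 'e) quiver \<Rightarrow> 'v \<Rightarrow> 'v \<Rightarrow> bool" where
  "ancestor Q A B \<longleftrightarrow> (\<exists>ev. evolution Q ev \<and> initial ev = A \<and> terminal ev = B)"

definition isotypic :: "('v, 'e) quiver \<Rightarrow> 'v \<Rightarrow> 'v \<Rightarrow> bool" where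
  "isotypic Q A B \<longleftrightarrow> ancestor Q A B \<and> ancestor Q B A"

definition primitive :: "('v, 'e) quiver \<Rightarrow> 'v \<Rightarrow> bool" where
  "primitive Q A \<longleftrightarrow> A \<in> verts Q \<and> (\<forall>B. ancestor Q B A \<longrightarrow> isotypic Q B A)"

definition full_evolution :: "('v, 'e) quiver \<Rightarrow> ('v, 'e) evolution \<Rightarrow> 'v \<Rightarrow> bool" where
  "full_evolution Q ev X \<longleftrightarrow> evolution Q ev \<and> primitive Q (initial ev) \<and> terminal ev = X"

text \<open>Height: smallest length of a full evolution (infinity if none).\<close>
definition height :: "('v, 'e) quiver \<Rightarrow> 'v \<Rightarrow> enat" where
  "height Q X = (INF ev \<in> {ev. full_evolution Q ev X}. enat (evo_length ev))"

definition embeds :: "('v, 'e) quiver \<Rightarrow> ('v, 'e) evolution \<Rightarrow> ('v, 'e) evolution \<Rightarrow> bool" where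
  "embeds Q \<alpha> \<beta> \<longleftrightarrow> evo_length \<alpha> \<le> evo_length \<beta> \<and>
     (\<exists>r :: nat \<Rightarrow> nat. strict_mono_on {0..evo_length \<alpha>} r \<and>
        r (evo_length \<alpha>) \<le> evo_length \<beta> \<and>
        (\<forall>k \<le> evo_length \<alpha>. isotypic Q (fst \<alpha> ! k) (fst \<beta> ! r k)))"

definition universal_evolution :: "('v, 'e) quiver \<Rightarrow> ('v, 'e) evolution \<Rightarrow> 'v \<Rightarrow> bool" where
  "universal_evolution Q \<alpha> X \<longleftrightarrow> full_evolution Q \<alpha> X \<and>
     (\<forall>\<beta>. full_evolution Q \<beta> X \<longrightarrow> embeds Q \<alpha> \<beta>)"

definition phylogenetic_vertex :: "('v, 'e) quiver \<Rightarrow> 'v \<Rightarrow> bool" where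
  "phylogenetic_vertex Q X \<longleftrightarrow> (\<exists>\<alpha>. universal_evolution Q \<alpha> X)"

definition monotonous :: "('v, 'e) quiver \<Rightarrow> bool" where
  "monotonous Q \<longleftrightarrow> (\<forall>A B. edges Q A B \<noteq> {} \<longrightarrow> height Q A \<ge> height Q B)"

text \<open>Smallness is automatic in HOL (vertices form a set), so it is not stated.\<close>
definition phylogenetic_quiver :: "('v, 'e) quiver \<Rightarrow> bool" where
  "phylogenetic_quiver Q \<longleftrightarrow> wf_quiver Q \<and> monotonous Q \<and>
     (\<forall>X \<in> verts Q. phylogenetic_vertex Q X)"

definition iso_class :: "('v, 'e) quiver \<Rightarrow> 'v \<Rightarrow> 'v set" where
  "iso_class Q A = {B \<in> verts Q. isotypic Q A B}"

definition evo_level :: "('v, 'e) quiver \<Rightarrow> nat \<Rightarrow> 'v set set" where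
  "evo_level Q m = {iso_class Q A | A. A \<in> verts Q \<and> height Q A = enat m}"

definition evo_le :: "('v, 'e) quiver \<Rightarrow> nat \<Rightarrow> 'v set \<Rightarrow> 'v set \<Rightarrow> bool" where
  "evo_le Q m C D \<longleftrightarrow> (\<exists>A \<in> C. \<exists>B \<in> D. ancestor Q A B)"

text \<open>Parental map O_m -> O_(m-1): [A] maps to [A_(m-1)] for a universal evolution
  A_0 <- ... <- A_(m-1) <- A_m = A (well defined by the paper).\<close>
definition evo_parent :: "('v, 'e) quiver \<Rightarrow> nat \<Rightarrow> 'v set \<Rightarrow> 'v set" where
  "evo_parent Q m C = (SOME D. \<exists>A \<in> C. \<exists>\<alpha>. universal_evolution Q \<alpha> A \<and>
                                   D = iso_class Q (fst \<alpha> ! (m - 1)))"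

definition E_sequence :: "(nat \<Rightarrow> 'a set) \<Rightarrow> (nat \<Rightarrow> 'a \<Rightarrow> 'a \<Rightarrow> bool) \<Rightarrow> (nat \<Rightarrow> 'a \<Rightarrow> 'a) \<Rightarrow> bool" where
  "E_sequence P le p \<longleftrightarrow>
     (\<forall>m. (\<forall>a \<in> P m. le m a a) \<and>
          (\<forall>a \<in> P m. \<forall>b \<in> P m. le m a b \<and> le m b a \<longrightarrow> a = b) \<and>
          (\<forall>a \<in> P m. \<forall>b \<in> P m. \<forall>c \<in> P m. le m a b \<and> le m b c \<longrightarrow> le m a c)) \<and>
     (\<forall>a \<in> P 0. \<forall>b \<in> P 0. le 0 a b \<longleftrightarrow> a = b) \<and>
     (\<forall>m \<ge> 1. \<forall>a \<in> P m. p m a \<in> P (m - 1)) \<and>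
     (\<forall>m \<ge> 1. \<forall>a \<in> P m. \<forall>b \<in> P m. le m a b \<longrightarrow> p m a = p m b)"

definition E_iso ::
  "(nat \<Rightarrow> 'a set) \<Rightarrow> (nat \<Rightarrow> 'a \<Rightarrow> 'a \<Rightarrow> bool) \<Rightarrow> (nat \<Rightarrow> 'a \<Rightarrow> 'a) \<Rightarrow>
   (nat \<Rightarrow> 'b set) \<Rightarrow> (nat \<Rightarrow> 'b \<Rightarrow> 'b \<Rightarrow> bool) \<Rightarrow> (nat \<Rightarrow> 'b \<Rightarrow> 'b) \<Rightarrow> bool" where
  "E_iso P le p P' le' p' \<longleftrightarrow>
     (\<exists>f :: nat \<Rightarrow> 'a \<Rightarrow> 'b.
        (\<forall>m. bij_betw (f m) (P m) (P' m)) \<and>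
        (\<forall>m \<ge> 1. \<forall>a \<in> P m. p' m (f m a) = f (m - 1) (p m a)) \<and>
        (\<forall>m. \<forall>a \<in> P m. \<forall>b \<in> P m. le m a b \<longleftrightarrow> le' m (f m a) (f m b)))"

end

theory Submission
  imports Defs
begin

primrec up :: "(nat \<Rightarrow> 'a \<Rightarrow> 'a) \<Rightarrow> nat \<Rightarrow> nat \<Rightarrow> 'a \<Rightarrow> 'a" where
  "up p 0 m b = b"
| "up p (Suc k) m b = p (m - k) (up p k m b)"

definition QQ :: "(nat \<Rightarrow> 'a set) \<Rightarrow> (nat \<Rightarrow> 'a \<Rightarrow> 'a \<Rightarrow> bool) \<Rightarrow> (nat \<Rightarrow> 'a \<Rightarrow> 'a) \<Rightarrow> (nat \<times> 'a, 'e) quiver" where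
  "QQ P le p = \<lparr>verts = {x. snd x \<in> P (fst x)},
     edges = (\<lambda>X Y. if snd X \<in> P (fst X) \<and> snd Y \<in> P (fst Y) \<and>
        ((fst X = fst Y \<and> le (fst X) (snd Y) (snd X)) \<or> (fst X = Suc (fst Y) \<and> snd Y = p (fst X) (snd X)))
        then UNIV else {})\<rparr>"

definition RR :: "(nat \<Rightarrow> 'a \<Rightarrow> 'a \<Rightarrow> bool) \<Rightarrow> (nat \<Rightarrow> 'a \<Rightarrow> 'a) \<Rightarrow> nat \<times> 'a \<Rightarrow> nat \<times> 'a \<Rightarrow> bool" where
  "RR le p A B \<longleftrightarrow> fst A \<le> fst B \<and> le (fst A) (snd A) (up p (fst B - fst A) (fst B) (snd B))"

definition gam :: "(nat \<Rightarrow> 'a \<Rightarrow> 'a) \<Rightarrow> 'e \<Rightarrow> nat \<Rightarrow> 'a \<Rightarrow> (nat \<times> 'a, 'e) evolution" where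
  "gam p e m b = (map (\<lambda>k. (k, up p (m - k) m b)) [0..<Suc m], replicate m e)"

lemma up_add: "up p (k + l) m b = up p l (m - k) (up p k m b)"
  by (induction l) (auto simp: diff_diff_add)

lemma ivt: fixes f :: "nat \<Rightarrow> nat" shows "(\<forall>i<n. f (Suc i) \<le> Suc (f i)) \<Longrightarrow> f 0 \<le> k \<Longrightarrow> k < f n \<Longrightarrow>
    \<exists>i<n. f i = k \<and> f (Suc i) = Suc k"
proof (induction n)
  case 0 then show ?case by simp
next
  case (Suc n)
  show ?case
  proof (cases "k < f n")
    case True with Suc show ?thesis by (metis less_SucI)
  next
    case False
    have "f (Suc n) \<le> Suc (f n)" using Suc by simp
    with False Suc.prems show ?thesis by (intro exI[of _ n]) auto
  qed
qed

lemma smono_add: fixes r :: "nat \<Rightarrow> nat" shows "strict_mono_on {0..m} r \<Longrightarrow> k + d \<le> m \<Longrightarrow> r k + d \<le> r (k + d)"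
proof (induction d)
  case 0 then show ?case by simp
next
  case (Suc d)
  then have "r (k + d) < r (k + Suc d)"
    by (intro strict_mono_onD[OF Suc.prems(1)]) auto
  with Suc show ?case by simp
qed

lemma smono_id: fixes r :: "nat \<Rightarrow> nat" shows "strict_mono_on {0..m} r \<Longrightarrow> r m \<le> m \<Longrightarrow> k \<le> m \<Longrightarrow> r k = k"
  using smono_add[of m r 0 k] smono_add[of m r k "m - k"] by simp

context
  fixes P :: "nat \<Rightarrow> 'a set" and le :: "nat \<Rightarrow> 'a \<Rightarrow> 'a \<Rightarrow> bool" and p :: "nat \<Rightarrow> 'a \<Rightarrow> 'a" and e0 :: 'e
  assumes E: "E_sequence P le p"
begin

lemma Eparts: "\<forall>m. (\<forall>a \<in> P m. le m a a) \<and>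
          (\<forall>a \<in> P m. \<forall>b \<in> P m. le m a b \<and> le m b a \<longrightarrow> a = b) \<and>
          (\<forall>a \<in> P m. \<forall>b \<in> P m. \<forall>c \<in> P m. le m a b \<and> le m b c \<longrightarrow> le m a c)"
     "\<forall>a \<in> P 0. \<forall>b \<in> P 0. le 0 a b \<longleftrightarrow> a = b"
     "\<forall>m \<ge> 1. \<forall>a \<in> P m. p m a \<in> P (m - 1)"
     "\<forall>m \<ge> 1. \<forall>a \<in> P m. \<forall>b \<in> P m. le m a b \<longrightarrow> p m a = p m b"
  using E unfolding E_sequence_def
  apply -
  apply (erule conjE, assumption)
  apply (erule conjE)+ apply assumption
  apply (erule conjE)+ apply assumption
  apply (erule conjE)+ apply assumption
  done
lemma lrefl: "a \<in> P m \<Longrightarrow> le m a a" using Eparts(1) by blast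
lemma lanti: "a \<in> P m \<Longrightarrow> b \<in> P m \<Longrightarrow> le m a b \<Longrightarrow> le m b a \<Longrightarrow> a = b"
  using Eparts(1) by blast
lemma ltrans: "a \<in> P m \<Longrightarrow> b \<in> P m \<Longrightarrow> c \<in> P m \<Longrightarrow> le m a b \<Longrightarrow> le m b c \<Longrightarrow> le m a c"
  using Eparts(1) by blast
lemma lzero: "a \<in> P 0 \<Longrightarrow> b \<in> P 0 \<Longrightarrow> le 0 a b \<Longrightarrow> a = b"
  using Eparts(2) by blast
lemma pin: "1 \<le> m \<Longrightarrow> a \<in> P m \<Longrightarrow> p m a \<in> P (m - 1)"
  using Eparts(3) by blast
lemma ple: "1 \<le> m \<Longrightarrow> a \<in> P m \<Longrightarrow> b \<in> P m \<Longrightarrow> le m a b \<Longrightarrow> p m a = p m b"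
  using Eparts(4) by blast

lemma up_in: "b \<in> P m \<Longrightarrow> k \<le> m \<Longrightarrow> up p k m b \<in> P (m - k)"
proof (induction k)
  case 0 then show ?case by simp
next
  case (Suc k)
  then have u: "up p k m b \<in> P (m - k)" by simp
  have "1 \<le> m - k" using Suc.prems by simp
  from pin[OF this u] have "p (m - k) (up p k m b) \<in> P (m - k - 1)" .
  moreover have "m - k - 1 = m - Suc k" by simp
  ultimately show ?case by simp
qed

lemma up_le: assumes "le j b c" "b \<in> P j" "c \<in> P j" "1 \<le> k" shows "up p k j b = up p k j c"
proof (cases "j = 0")
  case True
  then have "b = c" using lzero assms by blast
  then show ?thesis by simp
next
  case False
  obtain l where k: "k = 1 + l" using assms(4) by (metis le_Suc_ex)
  have "p j b = p j c" using ple[of j b c] assms False by simp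
  then show ?thesis unfolding k up_add by simp
qed

lemma RR_trans: assumes "snd A \<in> P (fst A)" "snd B \<in> P (fst B)" "snd C \<in> P (fst C)"
  "RR le p A B" "RR le p B C" shows "RR le p A C"
proof -
  obtain j a where A: "A = (j, a)" by fastforce
  obtain j' b' where B: "B = (j', b')" by fastforce
  obtain m b where C: "C = (m, b)" by fastforce
  have jj: "j \<le> j'" "j' \<le> m" and l1: "le j a (up p (j' - j) j' b')"
    and l2: "le j' b' (up p (m - j') m b)" using assms(4,5) unfolding RR_def A B C by auto
  have bm: "b \<in> P m" "a \<in> P j" "b' \<in> P j'" using assms A B C by auto
  show ?thesis
  proof (cases "j = j'")
    case True
    then show ?thesis using l1 l2 ltrans[of a j b' "up p (m - j) m b"] up_in[OF bm(1), of "m - j"] jj bm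
      unfolding RR_def A C by simp
  next
    case False
    have ui: "up p (m - j') m b \<in> P j'" using up_in[OF bm(1), of "m - j'"] jj by simp
    have "up p (j' - j) j' b' = up p (j' - j) j' (up p (m - j') m b)"
      using up_le[OF l2 bm(3) ui] jj False by simp
    also have "\<dots> = up p (m - j) m b"
      using up_add[of p "m - j'" "j' - j" m b] jj by simp
    finally show ?thesis using l1 jj unfolding RR_def A C by simp
  qed
qed

abbreviation QP :: "(nat \<times> 'a, 'e) quiver" where "QP \<equiv> QQ P le p"

lemma edge_step: assumes "edges QP X Y \<noteq> {}"
  shows "RR le p Y X \<and> fst X \<le> Suc (fst Y) \<and> snd X \<in> P (fst X) \<and> snd Y \<in> P (fst Y)"
proof -
  have h: "snd X \<in> P (fst X)" "snd Y \<in> P (fst Y)"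
    "(fst X = fst Y \<and> le (fst X) (snd Y) (snd X)) \<or> (fst X = Suc (fst Y) \<and> snd Y = p (fst X) (snd X))"
    using assms unfolding QQ_def by (auto split: if_splits)
  from h(3) show ?thesis
  proof
    assume "fst X = fst Y \<and> le (fst X) (snd Y) (snd X)"
    then show ?thesis using h unfolding RR_def by simp
  next
    assume a: "fst X = Suc (fst Y) \<and> snd Y = p (fst X) (snd X)"
    then show ?thesis using h lrefl[OF h(2)] unfolding RR_def by simp
  qed
qed

lemma evo_step: assumes "evolution QP ev" "Suc i < length (fst ev)"
  shows "edges QP (fst ev ! Suc i) (fst ev ! i) \<noteq> {}"
proof -
  have "1 \<le> Suc i \<and> Suc i < length (fst ev)" using assms(2) by simp
  then have "snd ev ! (Suc i - 1) \<in> edges QP (fst ev ! Suc i) (fst ev ! (Suc i - 1))"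
    using assms(1) unfolding evolution_def by blast
  then show ?thesis by auto
qed

lemma evo_verts: assumes "evolution QP ev" "i < length (fst ev)"
  shows "snd (fst ev ! i) \<in> P (fst (fst ev ! i))"
proof -
  have "fst ev ! i \<in> verts QP" using assms unfolding evolution_def by (meson nth_mem subsetD)
  then show ?thesis by (simp add: QQ_def)
qed

lemma evo_inv: assumes "evolution QP ev" "i + d < length (fst ev)"
  shows "RR le p (fst ev ! i) (fst ev ! (i + d))"
  using assms(2)
proof (induction d)
  case 0
  have "snd (fst ev ! i) \<in> P (fst (fst ev ! i))" using evo_verts[OF assms(1), of i] 0 by simp
  from lrefl[OF this] show ?case unfolding RR_def by simp
next
  case (Suc d)
  have "RR le p (fst ev ! (i + d)) (fst ev ! Suc (i + d))"
    using edge_step[OF evo_step[OF assms(1), of "i + d"]] Suc.prems by simp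
  moreover have "RR le p (fst ev ! i) (fst ev ! (i + d))" using Suc by simp
  moreover have "snd (fst ev ! i) \<in> P (fst (fst ev ! i))" "snd (fst ev ! (i + d)) \<in> P (fst (fst ev ! (i + d)))"
    "snd (fst ev ! Suc (i + d)) \<in> P (fst (fst ev ! Suc (i + d)))"
    using evo_verts[OF assms(1)] Suc.prems by simp_all
  ultimately have "RR le p (fst ev ! i) (fst ev ! Suc (i + d))"
    using RR_trans[of "fst ev ! i" "fst ev ! (i + d)" "fst ev ! Suc (i + d)"] by blast
  then show ?case by simp
qed

lemma evo_mono: assumes "evolution QP ev" "i \<le> j" "j < length (fst ev)"
  shows "fst (fst ev ! i) \<le> fst (fst ev ! j)"
  using evo_inv[OF assms(1), of i "j - i"] assms unfolding RR_def by simp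

lemma evo_bound: assumes "evolution QP ev" "i < length (fst ev)"
  shows "fst (fst ev ! i) \<le> fst (fst ev ! 0) + i"
  using assms(2)
proof (induction i)
  case 0 then show ?case by simp
next
  case (Suc i)
  then show ?case using edge_step[OF evo_step[OF assms(1), of i]] by simp
qed

lemma ancestor_RR: assumes "ancestor QP A B"
  shows "RR le p A B \<and> snd A \<in> P (fst A) \<and> snd B \<in> P (fst B)"
proof -
  obtain ev where ev: "evolution QP ev" "initial ev = A" "terminal ev = B"
    using assms unfolding ancestor_def by blast
  have ne: "fst ev \<noteq> []" using ev unfolding evolution_def by simp
  have A: "A = fst ev ! 0" using ev(2) ne unfolding initial_def by (simp add: hd_conv_nth)
  have B: "B = fst ev ! (0 + (length (fst ev) - 1))" using ev(3) ne unfolding terminal_def by (simp add: last_conv_nth)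
  have L: "length (fst ev) - 1 < length (fst ev)" using ne by simp
  have "RR le p A B" using evo_inv[OF ev(1), of 0 "length (fst ev) - 1"] L A B by simp
  moreover have "snd A \<in> P (fst A)" using evo_verts[OF ev(1), of 0] ne A by simp
  moreover have "snd B \<in> P (fst B)" using evo_verts[OF ev(1), of "length (fst ev) - 1"] L B by simp
  ultimately show ?thesis by simp
qed

lemma ancestor_refl: "snd A \<in> P (fst A) \<Longrightarrow> ancestor QP A A"
  unfolding ancestor_def
  by (rule exI[of _ "([A], [])"]) (auto simp: evolution_def initial_def terminal_def QQ_def)

lemma ancestor_edge: assumes "edges QP X Y \<noteq> {}" shows "ancestor QP Y X"
proof -
  have v: "snd X \<in> P (fst X)" "snd Y \<in> P (fst Y)" using edge_step[OF assms] by auto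
  obtain e where e: "e \<in> edges QP X Y" using assms by blast
  have vQ: "verts QP = {x. snd x \<in> P (fst x)}" by (simp add: QQ_def)
  have "evolution QP ([Y, X], [e])" using e v unfolding evolution_def vQ
    by (auto simp: less_Suc_eq)
  then show ?thesis unfolding ancestor_def initial_def terminal_def by force
qed

lemma isotypic_eq: assumes "isotypic QP A B" shows "A = B"
proof -
  have r: "RR le p A B" "RR le p B A" and v: "snd A \<in> P (fst A)" "snd B \<in> P (fst B)"
    using assms ancestor_RR unfolding isotypic_def by blast+
  have f: "fst A = fst B" using r unfolding RR_def by simp
  have "le (fst A) (snd A) (snd B)" "le (fst A) (snd B) (snd A)" using r f unfolding RR_def by simp_all
  then have "snd A = snd B" using lanti[of "snd A" "fst A" "snd B"] v f by simp
  then show ?thesis using f by (simp add: prod_eq_iff)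
qed

lemma isotypic_refl: "snd A \<in> P (fst A) \<Longrightarrow> isotypic QP A A"
  unfolding isotypic_def using ancestor_refl by blast

lemma iso_class_single: assumes "snd A \<in> P (fst A)" shows "iso_class QP A = {A}"
proof (rule set_eqI)
  fix B show "B \<in> iso_class QP A \<longleftrightarrow> B \<in> {A}"
    using isotypic_eq[of A B] isotypic_refl[OF assms] assms by (auto simp: iso_class_def QQ_def)
qed

lemma primitive_iff: "primitive QP A \<longleftrightarrow> snd A \<in> P (fst A) \<and> fst A = 0"
proof
  assume a: "primitive QP A"
  then have v: "snd A \<in> P (fst A)" unfolding primitive_def QQ_def by simp
  show "snd A \<in> P (fst A) \<and> fst A = 0"
  proof (rule ccontr)
    assume "\<not> ?thesis"
    with v have m: "1 \<le> fst A" by simp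
    let ?Y = "(fst A - 1, p (fst A) (snd A))"
    have "edges QP A ?Y \<noteq> {}" using m v pin[OF m v] unfolding QQ_def by simp
    then have "ancestor QP ?Y A" by (rule ancestor_edge)
    then have "isotypic QP ?Y A" using a unfolding primitive_def by blast
    then have "?Y = A" by (rule isotypic_eq)
    then have "fst ?Y = fst A" by simp
    then show False using m by simp
  qed
next
  assume a: "snd A \<in> P (fst A) \<and> fst A = 0"
  show "primitive QP A" unfolding primitive_def
  proof (intro conjI allI impI)
    have "snd A \<in> P (fst A)" using a by (rule conjunct1)
    then show "A \<in> verts QP" by (simp add: QQ_def)
    fix B assume "ancestor QP B A"
    then have "RR le p B A" "snd B \<in> P (fst B)" using ancestor_RR by blast+
    then have f: "fst B = 0" and "le 0 (snd B) (snd A)" using a unfolding RR_def by auto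
    then have "snd B = snd A" using lzero[of "snd B" "snd A"] a \<open>snd B \<in> P (fst B)\<close> by auto
    then have "B = A" using f a by (simp add: prod_eq_iff)
    then show "isotypic QP B A" using a isotypic_refl by blast
  qed
qed

lemma gam_nth: "k \<le> m \<Longrightarrow> fst (gam p e0 m b) ! k = (k, up p (m - k) m b)"
  unfolding gam_def by (simp del: upt_Suc)

lemma gam_len: "length (fst (gam p e0 m b)) = Suc m" "evo_length (gam p e0 m b) = m"
  unfolding gam_def evo_length_def by simp_all

lemma gam_evo: assumes b: "b \<in> P m" shows "evolution QP (gam p e0 m b)"
  unfolding evolution_def
proof (intro conjI allI impI)
  show "fst (gam p e0 m b) \<noteq> []" "length (snd (gam p e0 m b)) = length (fst (gam p e0 m b)) - 1"
    unfolding gam_def by simp_all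
  show "set (fst (gam p e0 m b)) \<subseteq> verts QP"
  proof
    fix x assume "x \<in> set (fst (gam p e0 m b))"
    then obtain k where k: "k \<le> m" "x = (k, up p (m - k) m b)" unfolding gam_def by auto
    then have "up p (m - k) m b \<in> P (m - (m - k))" using up_in[OF b, of "m - k"] by simp
    then show "x \<in> verts QP" using k by (simp add: QQ_def)
  qed
  fix k assume k: "1 \<le> k \<and> k < length (fst (gam p e0 m b))"
  then have km: "1 \<le> k" "k \<le> m" using gam_len by auto
  have X: "fst (gam p e0 m b) ! k = (k, up p (m - k) m b)" using gam_nth km by simp
  have Y: "fst (gam p e0 m b) ! (k - 1) = (k - 1, up p (m - (k - 1)) m b)" using gam_nth km by simp
  have s: "m - (k - 1) = Suc (m - k)" using km by simp
  have "up p (m - (k - 1)) m b = p k (up p (m - k) m b)" unfolding s using km by simp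
  moreover have "up p (m - k) m b \<in> P k" "up p (m - (k - 1)) m b \<in> P (k - 1)"
    using up_in[OF b, of "m - k"] up_in[OF b, of "m - (k - 1)"] km by auto
  ultimately show "snd (gam p e0 m b) ! (k - 1) \<in> edges QP (fst (gam p e0 m b) ! k) (fst (gam p e0 m b) ! (k - 1))"
    unfolding X Y using km by (simp add: QQ_def)
qed

lemma gam_full: assumes b: "b \<in> P m" shows "full_evolution QP (gam p e0 m b) (m, b)"
proof -
  have "initial (gam p e0 m b) = (0, up p m m b)"
    unfolding initial_def gam_def by (simp del: upt_Suc add: hd_map upt_rec)
  moreover have "terminal (gam p e0 m b) = (m, b)"
    unfolding terminal_def gam_def by simp
  moreover have "up p m m b \<in> P 0" using up_in[OF b, of m] by simp
  ultimately have "primitive QP (initial (gam p e0 m b))" using primitive_iff by simp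
  then show ?thesis unfolding full_evolution_def using gam_evo[OF b] \<open>terminal (gam p e0 m b) = (m, b)\<close> by simp
qed

lemma full_facts: assumes "full_evolution QP \<beta> X"
  shows "fst (fst \<beta> ! 0) = 0" "fst \<beta> ! evo_length \<beta> = X" "length (fst \<beta>) = Suc (evo_length \<beta>)"
    "fst X \<le> evo_length \<beta>"
proof -
  have ev: "evolution QP \<beta>" and pr: "primitive QP (initial \<beta>)" and t: "terminal \<beta> = X"
    using assms unfolding full_evolution_def by auto
  have ne: "fst \<beta> \<noteq> []" using ev unfolding evolution_def by simp
  show l: "length (fst \<beta>) = Suc (evo_length \<beta>)" using ne unfolding evo_length_def by simp
  show z: "fst (fst \<beta> ! 0) = 0" using pr primitive_iff ne unfolding initial_def by (simp add: hd_conv_nth)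
  show n: "fst \<beta> ! evo_length \<beta> = X" using t ne unfolding terminal_def evo_length_def by (simp add: last_conv_nth)
  show "fst X \<le> evo_length \<beta>" using evo_bound[OF ev, of "evo_length \<beta>"] l z n by simp
qed

lemma height_eq: assumes "snd X \<in> P (fst X)" shows "height QP X = enat (fst X)"
proof -
  obtain m b where X: "X = (m, b)" by fastforce
  have b: "b \<in> P m" using assms X by simp
  show ?thesis unfolding height_def
  proof (rule antisym)
    show "(INF ev\<in>{ev. full_evolution QP ev X}. enat (evo_length ev)) \<le> enat (fst X)"
      using gam_full[OF b] gam_len X by (metis (mono_tags, lifting) INF_lower fst_conv mem_Collect_eq)
    show "enat (fst X) \<le> (INF ev\<in>{ev. full_evolution QP ev X}. enat (evo_length ev))"
    proof (rule INF_greatest)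
      fix ev assume "ev \<in> {ev. full_evolution QP ev X}"
      then show "enat (fst X) \<le> enat (evo_length ev)" using full_facts(4)[of ev X] by simp
    qed
  qed
qed

lemma gam_embeds: assumes b: "b \<in> P m" and f: "full_evolution QP \<beta> (m, b)"
  shows "embeds QP (gam p e0 m b) \<beta>"
proof -
  define n where "n = evo_length \<beta>"
  have ev: "evolution QP \<beta>" using f unfolding full_evolution_def by simp
  have l0: "fst (fst \<beta> ! 0) = 0" and ln: "fst \<beta> ! n = (m, b)" and len: "length (fst \<beta>) = Suc n"
    and mn: "m \<le> n" using full_facts[OF f] unfolding n_def by auto
  define lv where "lv i = fst (fst \<beta> ! i)" for i
  have steps: "\<forall>i<n. lv (Suc i) \<le> Suc (lv i)"
    using edge_step[OF evo_step[OF ev]] len unfolding lv_def by simp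
  have "\<forall>k. \<exists>i. k < m \<longrightarrow> i < n \<and> lv i = k \<and> lv (Suc i) = Suc k"
    using ivt[OF steps] l0 ln unfolding lv_def by (metis fst_conv le0)
  then obtain r where r: "\<And>k. k < m \<Longrightarrow> r k < n \<and> lv (r k) = k \<and> lv (Suc (r k)) = Suc k"
    by metis
  define r' where "r' k = (if k < m then r k else n)" for k
  have val: "fst \<beta> ! r k = (k, up p (m - k) m b)" if k: "k < m" for k
  proof -
    let ?X = "fst \<beta> ! Suc (r k)" and ?Y = "fst \<beta> ! r k"
    have e: "edges QP ?X ?Y \<noteq> {}" using evo_step[OF ev, of "r k"] r[OF k] len by simp
    have h: "snd ?X \<in> P (fst ?X)" "snd ?Y \<in> P (fst ?Y)"
      "(fst ?X = fst ?Y \<and> le (fst ?X) (snd ?Y) (snd ?X)) \<or> (fst ?X = Suc (fst ?Y) \<and> snd ?Y = p (fst ?X) (snd ?X))"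
      using e unfolding QQ_def by (auto split: if_splits)
    have lvs: "fst ?X = Suc k" "fst ?Y = k" using r[OF k] unfolding lv_def by auto
    then have Yp: "snd ?Y = p (Suc k) (snd ?X)" using h(3) by simp
    have "RR le p ?X (fst \<beta> ! (Suc (r k) + (n - Suc (r k))))"
      using evo_inv[OF ev, of "Suc (r k)" "n - Suc (r k)"] r[OF k] len by simp
    then have "le (Suc k) (snd ?X) (up p (m - Suc k) m b)"
      using r[OF k] ln lvs unfolding RR_def by (simp add: Suc_leI)
    then have "p (Suc k) (snd ?X) = p (Suc k) (up p (m - Suc k) m b)"
      using ple h(1) lvs up_in[OF b, of "m - Suc k"] k by simp
    also have "\<dots> = up p (Suc (m - Suc k)) m b" using k by simp
    also have "Suc (m - Suc k) = m - k" using k by simp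
    finally show ?thesis using Yp lvs by (simp add: prod_eq_iff)
  qed
  have mono: "lv i \<le> lv j" if "i \<le> j" "j \<le> n" for i j
    using evo_mono[OF ev] that len unfolding lv_def by simp
  show ?thesis unfolding embeds_def gam_len
  proof (intro conjI exI[of _ r'] allI impI)
    show "m \<le> evo_length \<beta>" using mn n_def by simp
    show "r' m \<le> evo_length \<beta>" unfolding r'_def n_def by simp
    show "strict_mono_on {0..m} r'"
    proof (rule strict_mono_onI)
      fix x y assume xy: "x \<in> {0..m}" "y \<in> {0..m}" "x < y"
      show "r' x < r' y"
      proof (cases "y < m")
        case True
        then have xm: "x < m" using xy by simp
        show ?thesis
        proof (rule ccontr)
          assume "\<not> r' x < r' y"
          then have "r y \<le> r x" using True xm unfolding r'_def by simp
          then have "lv (r y) \<le> lv (r x)" using mono[of "r y" "r x"] r[OF xm] by auto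
          then show False using r[OF xm] r[OF True] xy by simp
        qed
      next
        case False
        then show ?thesis using xy r unfolding r'_def by auto
      qed
    qed
    fix k assume km: "k \<le> m"
    show "isotypic QP (fst (gam p e0 m b) ! k) (fst \<beta> ! r' k)"
    proof (cases "k < m")
      case True
      then show ?thesis using val[OF True] gam_nth[OF km] isotypic_refl up_in[OF b, of "m - k"]
        unfolding r'_def by simp
    next
      case False
      then have "k = m" using km by simp
      then show ?thesis using ln gam_nth[OF km] isotypic_refl b unfolding r'_def by simp
    qed
  qed
qed

lemma gam_universal: "b \<in> P m \<Longrightarrow> universal_evolution QP (gam p e0 m b) (m, b)"
  unfolding universal_evolution_def using gam_full gam_embeds by blast

lemma univ_unique: assumes b: "b \<in> P m" and u: "universal_evolution QP \<alpha> (m, b)" and k: "k \<le> m"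
  shows "fst \<alpha> ! k = (k, up p (m - k) m b)"
proof -
  have f: "full_evolution QP \<alpha> (m, b)" using u unfolding universal_evolution_def by simp
  have em: "embeds QP \<alpha> (gam p e0 m b)" using u gam_full[OF b] unfolding universal_evolution_def by blast
  have "m \<le> evo_length \<alpha>" using full_facts(4)[OF f] by simp
  then have L: "evo_length \<alpha> = m" using em gam_len unfolding embeds_def by simp
  obtain r where r: "strict_mono_on {0..m} r" "r m \<le> m"
    "\<forall>k\<le>m. isotypic QP (fst \<alpha> ! k) (fst (gam p e0 m b) ! r k)"
    using em gam_len L unfolding embeds_def by auto
  have "r k = k" using smono_id[OF r(1,2) k] .
  then have "isotypic QP (fst \<alpha> ! k) (fst (gam p e0 m b) ! k)" using r(3) k by metis
  then show ?thesis using isotypic_eq gam_nth[OF k] by simp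
qed

lemma evo_level_eq: "evo_level QP m = (\<lambda>a. {(m, a)}) ` P m"
proof (rule set_eqI)
  fix C
  show "C \<in> evo_level QP m \<longleftrightarrow> C \<in> (\<lambda>a. {(m, a)}) ` P m"
  proof
    assume "C \<in> evo_level QP m"
    then obtain A where A: "C = iso_class QP A" "A \<in> verts QP" "height QP A = enat m"
      unfolding evo_level_def by blast
    have v: "snd A \<in> P (fst A)" using A(2) by (simp add: QQ_def)
    have f: "fst A = m" using A(3) height_eq[OF v] by simp
    have "C = {(m, snd A)}" using A(1) iso_class_single[OF v] f by (simp add: prod_eq_iff)
    then show "C \<in> (\<lambda>a. {(m, a)}) ` P m" using v f by auto
  next
    assume "C \<in> (\<lambda>a. {(m, a)}) ` P m"
    then obtain a where a: "a \<in> P m" "C = {(m, a)}" by blast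
    have "iso_class QP (m, a) = {(m, a)}" using iso_class_single[of "(m, a)"] a by simp
    moreover have "height QP (m, a) = enat m" using height_eq[of "(m, a)"] a by simp
    moreover have "(m, a) \<in> verts QP" using a by (simp add: QQ_def)
    ultimately show "C \<in> evo_level QP m" unfolding evo_level_def using a by blast
  qed
qed

lemma parent_eq: assumes m: "1 \<le> m" and a: "a \<in> P m"
  shows "evo_parent QP m {(m, a)} = {(m - 1, p m a)}"
  unfolding evo_parent_def
proof (rule someI2_ex)
  show "\<exists>D. \<exists>A\<in>{(m, a)}. \<exists>\<alpha>. universal_evolution QP \<alpha> A \<and> D = iso_class QP (fst \<alpha> ! (m - 1))"
    using gam_universal[OF a] by blast
  fix D assume "\<exists>A\<in>{(m, a)}. \<exists>\<alpha>. universal_evolution QP \<alpha> A \<and> D = iso_class QP (fst \<alpha> ! (m - 1))"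
  then obtain \<alpha> where u: "universal_evolution QP \<alpha> (m, a)" and D: "D = iso_class QP (fst \<alpha> ! (m - 1))" by blast
  have "fst \<alpha> ! (m - 1) = (m - 1, up p (m - (m - 1)) m a)" using univ_unique[OF a u] by simp
  also have "m - (m - 1) = Suc 0" using m by simp
  finally have "fst \<alpha> ! (m - 1) = (m - 1, p m a)" by simp
  then show "D = {(m - 1, p m a)}" using D iso_class_single pin[OF m a] by simp
qed

lemma le_iff: assumes "a \<in> P m" "b \<in> P m"
  shows "le m a b \<longleftrightarrow> evo_le QP m {(m, a)} {(m, b)}"
proof
  assume "le m a b"
  then have "edges QP (m, b) (m, a) \<noteq> {}" using assms by (simp add: QQ_def)
  then show "evo_le QP m {(m, a)} {(m, b)}" unfolding evo_le_def using ancestor_edge by blast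
next
  assume "evo_le QP m {(m, a)} {(m, b)}"
  then have "ancestor QP (m, a) (m, b)" unfolding evo_le_def by blast
  from ancestor_RR[OF this] show "le m a b" unfolding RR_def by simp
qed

lemma main: "phylogenetic_quiver QP \<and> E_iso P le p (evo_level QP) (evo_le QP) (evo_parent QP)"
proof
  show "phylogenetic_quiver QP" unfolding phylogenetic_quiver_def
  proof (intro conjI ballI)
    show "wf_quiver QP" unfolding wf_quiver_def using edge_step by (simp add: QQ_def)
    show "monotonous QP" unfolding monotonous_def
    proof (intro allI impI)
      fix A B assume "edges QP A B \<noteq> {}"
      from edge_step[OF this] show "height QP B \<le> height QP A"
        using height_eq unfolding RR_def by simp
    qed
    fix X assume "X \<in> verts QP"
    then have "snd X \<in> P (fst X)" by (simp add: QQ_def)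
    then show "phylogenetic_vertex QP X" unfolding phylogenetic_vertex_def
      using gam_universal[of "snd X" "fst X"] by (metis prod.collapse)
  qed
  show "E_iso P le p (evo_level QP) (evo_le QP) (evo_parent QP)" unfolding E_iso_def
  proof (intro exI[of _ "\<lambda>m a. {(m, a)}"] conjI allI impI ballI)
    fix m show "bij_betw (\<lambda>a. {(m, a)}) (P m) (evo_level QP m)"
      unfolding evo_level_eq by (auto simp: bij_betw_def inj_on_def)
  next
    fix m a assume "1 \<le> m" "a \<in> P m"
    then show "evo_parent QP m {(m, a)} = {(m - 1, p m a)}" by (rule parent_eq)
  next
    fix m a b assume "a \<in> P m" "b \<in> P m"
    then show "le m a b = evo_le QP m {(m, a)} {(m, b)}" by (rule le_iff)
  qed
qed

end

theorem theorem8p1: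
  fixes P :: "nat \<Rightarrow> 'a set" and le :: "nat \<Rightarrow> 'a \<Rightarrow> 'a \<Rightarrow> bool" and p :: "nat \<Rightarrow> 'a \<Rightarrow> 'a"
  assumes "E_sequence P le p"
  shows "\<exists>Q :: (nat \<times> 'a, 'e) quiver.
           phylogenetic_quiver Q \<and>
           E_iso P le p (evo_level Q) (evo_le Q) (evo_parent Q)"
  using main[OF assms] by blast

end
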